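(* Let $\Gamma$ be a finite graph and let $z\in H^1(\Gamma,\mathbb{Z})$ be nonzero. Then $z$ is a coedge, i.e. $z=\pm e^*$ for some edge $e$ of $\Gamma$, if and only if $z(c)\in\{+1,0,-1\}$ for every $(0,1)$-cycle $c$ of $\Gamma$.
   Context: Edges of $\Gamma$ are oriented; $H_1(\Gamma,\mathbb{Z})\subset\bigoplus\mathbb{Z}e_i$ is the cycle group and $H^1(\Gamma,\mathbb{Z})$ its dual (cokernel of the coboundary $C^0\to\bigoplus\mathbb{Z}e_i^*$); the image of $e_i^*$ in $H^1$ is the coedge $e_i^*$ (up to sign, depending on the chosen orientation). A $(0,1)$-cycle is a cycle in which every edge appears with coefficient in $\{+1,0,-1\}$, i.e. a sum of simple cycles with pairwise disjoint edge supports. *)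

theory Defs
  imports Main
begin

text \<open>A finite oriented (multi)graph: finite vertex set V, finite edge set E,
  each edge e \<in> E oriented from src e to tgt e (loops and parallel edges allowed).\<close>

definition graph :: "'v set \<Rightarrow> 'e set \<Rightarrow> ('e \<Rightarrow> 'v) \<Rightarrow> ('e \<Rightarrow> 'v) \<Rightarrow> bool" where
  "graph V E src tgt \<longleftrightarrow> finite V \<and> finite E \<and> (\<forall>e\<in>E. src e \<in> V \<and> tgt e \<in> V)"

text \<open>1-chains are integer functions on edges supported on E; 1-cycles are those with
  zero boundary, i.e. elements of H_1(Gamma,Z).\<close>
definition is_cycle :: "'v set \<Rightarrow> 'e set \<Rightarrow> ('e \<Rightarrow> 'v) \<Rightarrow> ('e \<Rightarrow> 'v) \<Rightarrow> ('e \<Rightarrow> int) \<Rightarrow> bool" where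
  "is_cycle V E src tgt c \<longleftrightarrow> (\<forall>e. e \<notin> E \<longrightarrow> c e = 0) \<and>
     (\<forall>v\<in>V. (\<Sum>e\<in>{e\<in>E. tgt e = v}. c e) - (\<Sum>e\<in>{e\<in>E. src e = v}. c e) = 0)"

definition is_01_cycle :: "'v set \<Rightarrow> 'e set \<Rightarrow> ('e \<Rightarrow> 'v) \<Rightarrow> ('e \<Rightarrow> 'v) \<Rightarrow> ('e \<Rightarrow> int) \<Rightarrow> bool" where
  "is_01_cycle V E src tgt c \<longleftrightarrow> is_cycle V E src tgt c \<and> (\<forall>e\<in>E. c e \<in> {1, 0, -1})"

text \<open>Coboundary C^0 \<rightarrow> C^1. A 1-cochain f (an integer function on E) represents a class
  in H^1(Gamma,Z) = C^1 / image of the coboundary; f and g represent the same class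
  iff f - g is a coboundary on E.\<close>
definition is_coboundary :: "'v set \<Rightarrow> 'e set \<Rightarrow> ('e \<Rightarrow> 'v) \<Rightarrow> ('e \<Rightarrow> 'v) \<Rightarrow> ('e \<Rightarrow> int) \<Rightarrow> bool" where
  "is_coboundary V E src tgt f \<longleftrightarrow>
     (\<exists>g :: 'v \<Rightarrow> int. \<forall>e\<in>E. f e = g (tgt e) - g (src e))"

definition cohomologous :: "'v set \<Rightarrow> 'e set \<Rightarrow> ('e \<Rightarrow> 'v) \<Rightarrow> ('e \<Rightarrow> 'v) \<Rightarrow> ('e \<Rightarrow> int) \<Rightarrow> ('e \<Rightarrow> int) \<Rightarrow> bool" where
  "cohomologous V E src tgt f g \<longleftrightarrow> is_coboundary V E src tgt (\<lambda>e. f e - g e)"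

definition dual_edge :: "'e \<Rightarrow> 'e \<Rightarrow> int" where
  "dual_edge e = (\<lambda>e'. if e' = e then 1 else 0)"

definition pairing :: "'e set \<Rightarrow> ('e \<Rightarrow> int) \<Rightarrow> ('e \<Rightarrow> int) \<Rightarrow> int" where
  "pairing E f c = (\<Sum>e\<in>E. f e * c e)"

end

theory Submission
  imports Defs
begin

definition bd :: "'e set \<Rightarrow> ('e \<Rightarrow> 'v) \<Rightarrow> ('e \<Rightarrow> 'v) \<Rightarrow> ('e \<Rightarrow> int) \<Rightarrow> 'v \<Rightarrow> int" where
  "bd E src tgt c v = (\<Sum>e\<in>{e\<in>E. tgt e = v}. c e) - (\<Sum>e\<in>{e\<in>E. src e = v}. c e)"

lemma is_cycle_bd: "is_cycle V E src tgt c \<longleftrightarrow> (\<forall>e. e \<notin> E \<longrightarrow> c e = 0) \<and> (\<forall>v\<in>V. bd E src tgt c v = 0)"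
  unfolding is_cycle_def bd_def by simp

lemma bd_add: "bd E src tgt (\<lambda>x. a x + b x) y = bd E src tgt a y + bd E src tgt b y"
  unfolding bd_def by (simp add: sum.distrib)

lemma bd_diff: "bd E src tgt (\<lambda>x. a x - b x) y = bd E src tgt a y - bd E src tgt b y"
  unfolding bd_def by (simp add: sum_subtractf)

lemma bd_mult: "bd E src tgt (\<lambda>x. k * a x) y = k * bd E src tgt a y"
  unfolding bd_def by (simp add: sum_distrib_left right_diff_distrib)

lemma bd_dual: "finite E \<Longrightarrow> e \<in> E \<Longrightarrow> bd E src tgt (dual_edge e) y =
   (if tgt e = y then 1 else 0) - (if src e = y then 1 else 0)"
  unfolding bd_def dual_edge_def by simp

lemma sum_tgt:
  fixes g :: "'v \<Rightarrow> int" and c :: "'e \<Rightarrow> int"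
  assumes "finite V" "finite E" "\<forall>e\<in>E. f e \<in> V"
  shows "(\<Sum>e\<in>E. g (f e) * c e) = (\<Sum>v\<in>V. g v * (\<Sum>e\<in>{e\<in>E. f e = v}. c e))"
proof -
  have "(\<Sum>e\<in>E. g (f e) * c e) = (\<Sum>v\<in>V. \<Sum>e\<in>{e. e\<in>E \<and> f e = v}. g (f e) * c e)"
    using assms(3) by (intro sum.group[OF assms(2,1), symmetric]) auto
  also have "\<dots> = (\<Sum>v\<in>V. g v * (\<Sum>e\<in>{e\<in>E. f e = v}. c e))"
  proof (rule sum.cong[OF refl])
    fix v assume "v \<in> V"
    have "(\<Sum>e\<in>{e\<in>E. f e = v}. g (f e) * c e) = (\<Sum>e\<in>{e\<in>E. f e = v}. g v * c e)"
      by (rule sum.cong) auto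
    then show "(\<Sum>e\<in>{e\<in>E. f e = v}. g (f e) * c e) = g v * (\<Sum>e\<in>{e\<in>E. f e = v}. c e)"
      by (simp only: sum_distrib_left)
  qed
  finally show ?thesis .
qed

lemma pairing_delta:
  assumes "graph V E src tgt"
  shows "pairing E (\<lambda>e. g (tgt e) - g (src e)) c = (\<Sum>v\<in>V. g v * bd E src tgt c v)"
proof -
  have f: "finite V" "finite E" "\<forall>e\<in>E. src e \<in> V" "\<forall>e\<in>E. tgt e \<in> V"
    using assms unfolding graph_def by auto
  have "pairing E (\<lambda>e. g (tgt e) - g (src e)) c = (\<Sum>e\<in>E. g (tgt e) * c e) - (\<Sum>e\<in>E. g (src e) * c e)"
    unfolding pairing_def by (simp add: left_diff_distrib sum_subtractf)
  also have "\<dots> = (\<Sum>v\<in>V. g v * (\<Sum>e\<in>{e\<in>E. tgt e = v}. c e)) - (\<Sum>v\<in>V. g v * (\<Sum>e\<in>{e\<in>E. src e = v}. c e))"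
    using sum_tgt[OF f(1,2) f(4), of g c] sum_tgt[OF f(1,2) f(3), of g c] by simp
  also have "\<dots> = (\<Sum>v\<in>V. g v * bd E src tgt c v)"
    unfolding bd_def by (simp add: sum_subtractf right_diff_distrib)
  finally show ?thesis .
qed

lemma pairing_cob_cycle:
  assumes "graph V E src tgt" "is_cycle V E src tgt c"
  shows "pairing E (\<lambda>e. g (tgt e) - g (src e)) c = 0"
  using assms(2) unfolding pairing_delta[OF assms(1)] is_cycle_bd by simp

lemma pairing_cong: "(\<forall>e\<in>E. f e = f' e) \<Longrightarrow> pairing E f c = pairing E f' c"
  unfolding pairing_def by simp

lemma coh_pairing:
  assumes "graph V E src tgt" "is_cycle V E src tgt c" "cohomologous V E src tgt z w"
  shows "pairing E z c = pairing E w c"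
proof -
  obtain g where g: "\<forall>e\<in>E. z e - w e = g (tgt e) - g (src e)"
    using assms(3) unfolding cohomologous_def is_coboundary_def by auto
  have "pairing E z c - pairing E w c = pairing E (\<lambda>e. z e - w e) c"
    unfolding pairing_def by (simp add: left_diff_distrib sum_subtractf)
  also have "\<dots> = pairing E (\<lambda>e. g (tgt e) - g (src e)) c"
    using g by (rule pairing_cong)
  also have "\<dots> = 0" by (rule pairing_cob_cycle[OF assms(1,2)])
  finally show ?thesis by simp
qed

lemma pairing_dual1:
  assumes "finite E" "e0 \<in> E"
  shows "pairing E (\<lambda>e. d * dual_edge e0 e) c = d * c e0"
proof -
  have "pairing E (\<lambda>e. d * dual_edge e0 e) c = (\<Sum>e\<in>E. if e = e0 then d * c e else 0)"
    unfolding pairing_def dual_edge_def by (rule sum.cong) auto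
  then show ?thesis using assms by simp
qed

lemma pairing_dual2:
  assumes "finite E" "e0 \<in> E" "e1 \<in> E"
  shows "pairing E (\<lambda>e. s * dual_edge e1 e + d * dual_edge e0 e) c = s * c e1 + d * c e0"
proof -
  have "pairing E (\<lambda>e. s * dual_edge e1 e + d * dual_edge e0 e) c =
     pairing E (\<lambda>e. s * dual_edge e1 e) c + pairing E (\<lambda>e. d * dual_edge e0 e) c"
    unfolding pairing_def by (simp add: distrib_right sum.distrib)
  then show ?thesis using pairing_dual1[OF assms(1,2)] pairing_dual1[OF assms(1,3)] by simp
qed


inductive pth :: "('e \<Rightarrow> int \<Rightarrow> bool) \<Rightarrow> ('e \<Rightarrow> 'v) \<Rightarrow> ('e \<Rightarrow> 'v) \<Rightarrow> 'v \<Rightarrow> 'v \<Rightarrow> 'v set \<Rightarrow> ('e \<Rightarrow> int) \<Rightarrow> bool"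
  for A src tgt u where
  nil: "pth A src tgt u u {u} (\<lambda>_. 0)"
| fwd: "pth A src tgt u v S p \<Longrightarrow> A e 1 \<Longrightarrow> src e = v \<Longrightarrow> tgt e \<notin> S \<Longrightarrow>
    pth A src tgt u (tgt e) (insert (tgt e) S) (\<lambda>x. p x + dual_edge e x)"
| bwd: "pth A src tgt u v S p \<Longrightarrow> A e (-1) \<Longrightarrow> tgt e = v \<Longrightarrow> src e \<notin> S \<Longrightarrow>
    pth A src tgt u (src e) (insert (src e) S) (\<lambda>x. p x - dual_edge e x)"

lemma pth_inv:
  "pth A src tgt u v S p \<Longrightarrow> v \<in> S \<and> (\<forall>e. p e \<noteq> 0 \<longrightarrow> src e \<in> S \<and> tgt e \<in> S \<and> (p e = 1 \<or> p e = -1) \<and> A e (p e))"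
proof (induction rule: pth.induct)
  case nil
  then show ?case by simp
next
  case (fwd v S p e)
  have pe: "p e = 0" using fwd.IH fwd.hyps(4) by blast
  show ?case
  proof (rule conjI[OF _ allI[OF impI]])
    fix e' assume "p e' + dual_edge e e' \<noteq> 0"
    then show "src e' \<in> insert (tgt e) S \<and> tgt e' \<in> insert (tgt e) S \<and>
      (p e' + dual_edge e e' = 1 \<or> p e' + dual_edge e e' = -1) \<and> A e' (p e' + dual_edge e e')"
      using fwd.IH fwd.hyps pe unfolding dual_edge_def by (cases "e' = e") auto
  qed simp
next
  case (bwd v S p e)
  have pe: "p e = 0" using bwd.IH bwd.hyps(4) by blast
  show ?case
  proof (rule conjI[OF _ allI[OF impI]])
    fix e' assume "p e' - dual_edge e e' \<noteq> 0"
    then show "src e' \<in> insert (src e) S \<and> tgt e' \<in> insert (src e) S \<and>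
      (p e' - dual_edge e e' = 1 \<or> p e' - dual_edge e e' = -1) \<and> A e' (p e' - dual_edge e e')"
      using bwd.IH bwd.hyps pe unfolding dual_edge_def by (cases "e' = e") auto
  qed simp
qed

lemma pth_bd:
  assumes "finite E" "\<And>e \<sigma>. A e \<sigma> \<Longrightarrow> e \<in> E"
  shows "pth A src tgt u v S p \<Longrightarrow> (\<forall>e. e \<notin> E \<longrightarrow> p e = 0) \<and>
     (\<forall>x. bd E src tgt p x = (if x = v then 1 else 0) - (if x = u then 1 else 0))"
proof (induction rule: pth.induct)
  case nil
  then show ?case unfolding bd_def by simp
next
  case (fwd v S p e)
  have eE: "e \<in> E" using fwd.hyps(2) assms(2) by blast
  show ?case
  proof (rule conjI)
    show "\<forall>e'. e' \<notin> E \<longrightarrow> p e' + dual_edge e e' = 0"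
      using fwd.IH eE unfolding dual_edge_def by auto
    show "\<forall>x. bd E src tgt (\<lambda>x. p x + dual_edge e x) x = (if x = tgt e then 1 else 0) - (if x = u then 1 else 0)"
      using fwd.IH fwd.hyps(3) unfolding bd_add bd_dual[OF assms(1) eE] by auto
  qed
next
  case (bwd v S p e)
  have eE: "e \<in> E" using bwd.hyps(2) assms(2) by blast
  show ?case
  proof (rule conjI)
    show "\<forall>e'. e' \<notin> E \<longrightarrow> p e' - dual_edge e e' = 0"
      using bwd.IH eE unfolding dual_edge_def by auto
    show "\<forall>x. bd E src tgt (\<lambda>x. p x - dual_edge e x) x = (if x = src e then 1 else 0) - (if x = u then 1 else 0)"
      using bwd.IH bwd.hyps(3) unfolding bd_diff bd_dual[OF assms(1) eE] by auto
  qed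
qed

lemma pth_prefix:
  "pth A src tgt u v S p \<Longrightarrow> x \<in> S \<Longrightarrow> \<exists>S' p'. pth A src tgt u x S' p'"
proof (induction arbitrary: x rule: pth.induct)
  case nil
  then show ?case using pth.nil[of A src tgt u] by auto
next
  case (fwd v S p e)
  show ?case
  proof (cases "x = tgt e")
    case True
    then show ?thesis using pth.fwd[OF fwd.hyps] by blast
  next
    case False
    then show ?thesis using fwd.IH fwd.prems by blast
  qed
next
  case (bwd v S p e)
  show ?case
  proof (cases "x = src e")
    case True
    then show ?thesis using pth.bwd[OF bwd.hyps] by blast
  next
    case False
    then show ?thesis using bwd.IH bwd.prems by blast
  qed
qed

definition reach where "reach A src tgt u = {x. \<exists>S p. pth A src tgt u x S p}"

lemma reach_start: "u \<in> reach A src tgt u"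
  unfolding reach_def using pth.nil[of A src tgt u] by blast

lemma reach_fwd: "x \<in> reach A src tgt u \<Longrightarrow> A e 1 \<Longrightarrow> src e = x \<Longrightarrow> tgt e \<in> reach A src tgt u"
proof -
  assume a: "x \<in> reach A src tgt u" "A e 1" "src e = x"
  then obtain S p where p: "pth A src tgt u x S p" unfolding reach_def by auto
  show ?thesis
  proof (cases "tgt e \<in> S")
    case True
    then show ?thesis using pth_prefix[OF p True] unfolding reach_def by auto
  next
    case False
    then show ?thesis using pth.fwd[OF p a(2,3) False] unfolding reach_def by auto
  qed
qed

lemma reach_bwd: "x \<in> reach A src tgt u \<Longrightarrow> A e (-1) \<Longrightarrow> tgt e = x \<Longrightarrow> src e \<in> reach A src tgt u"
proof -
  assume a: "x \<in> reach A src tgt u" "A e (-1)" "tgt e = x"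
  then obtain S p where p: "pth A src tgt u x S p" unfolding reach_def by auto
  show ?thesis
  proof (cases "src e \<in> S")
    case True
    then show ?thesis using pth_prefix[OF p True] unfolding reach_def by auto
  next
    case False
    then show ?thesis using pth.bwd[OF p a(2,3) False] unfolding reach_def by auto
  qed
qed


lemma reach_path:
  assumes "finite E" "\<And>e \<sigma>. A e \<sigma> \<Longrightarrow> e \<in> E" "v \<in> reach A src tgt u"
  shows "\<exists>p. (\<forall>e. e \<notin> E \<longrightarrow> p e = 0) \<and> (\<forall>e. p e \<noteq> 0 \<longrightarrow> (p e = 1 \<or> p e = -1) \<and> A e (p e)) \<and>
     (\<forall>x. bd E src tgt p x = (if x = v then 1 else 0) - (if x = u then 1 else 0))"
proof -
  obtain S p where p: "pth A src tgt u v S p" using assms(3) unfolding reach_def by auto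
  note a = pth_inv[OF p] and b = pth_bd[OF assms(1,2) p]
  show ?thesis
    by (rule exI[of _ p], intro conjI allI impI) (use a b in fast)+
qed

lemma bridge:
  assumes G: "graph V E src tgt" and eE: "e \<in> E"
    and nc: "\<forall>c. is_01_cycle V E src tgt c \<longrightarrow> c e = 0"
  shows "is_coboundary V E src tgt (dual_edge e)"
proof -
  have fE: "finite E" using G unfolding graph_def by auto
  define A where "A = (\<lambda>e' (\<sigma>::int). e' \<in> E \<and> e' \<noteq> e)"
  define T where "T = reach A src tgt (tgt e)"
  have AE: "\<And>e' \<sigma>. A e' \<sigma> \<Longrightarrow> e' \<in> E" unfolding A_def by auto
  have tT: "tgt e \<in> T" unfolding T_def by (rule reach_start)
  have sT: "src e \<notin> T"
  proof
    assume sT': "src e \<in> T"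
    have "\<exists>p. (\<forall>e. e \<notin> E \<longrightarrow> p e = 0) \<and> (\<forall>e. p e \<noteq> 0 \<longrightarrow> (p e = 1 \<or> p e = -1) \<and> A e (p e)) \<and>
     (\<forall>x. bd E src tgt p x = (if x = src e then 1 else 0) - (if x = tgt e then 1 else 0))"
      by (rule reach_path[where A=A and E=E]) (use fE AE sT' in \<open>auto simp: T_def\<close>)
    then obtain p where p1: "\<forall>e. e \<notin> E \<longrightarrow> p e = 0"
      and p2: "\<forall>e. p e \<noteq> 0 \<longrightarrow> (p e = 1 \<or> p e = -1) \<and> A e (p e)"
      and p3: "\<forall>x. bd E src tgt p x = (if x = src e then 1 else 0) - (if x = tgt e then 1 else 0)"
      by blast
    define c where "c = (\<lambda>x. p x + dual_edge e x)"
    have pe: "p e = 0" using p2 unfolding A_def by auto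
    have "is_01_cycle V E src tgt c"
      unfolding is_01_cycle_def is_cycle_bd
    proof (intro conjI ballI allI impI)
      fix e' assume "e' \<notin> E" then show "c e' = 0" using p1 eE unfolding c_def dual_edge_def by auto
    next
      fix v show "bd E src tgt c v = 0" unfolding c_def bd_add bd_dual[OF fE eE] using p3 by auto
    next
      fix e' assume "e' \<in> E" then show "c e' \<in> {1, 0, -1}"
        using p2 pe unfolding c_def dual_edge_def by (cases "e' = e") auto
    qed
    moreover have "c e = 1" unfolding c_def dual_edge_def using pe by simp
    ultimately show False using nc by auto
  qed
  define g where "g = (\<lambda>x. if x \<in> T then 1 else (0::int))"
  have "\<forall>e'\<in>E. dual_edge e e' = g (tgt e') - g (src e')"
  proof
    fix e' assume e'E: "e' \<in> E"
    show "dual_edge e e' = g (tgt e') - g (src e')"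
    proof (cases "e' = e")
      case True then show ?thesis using tT sT unfolding g_def dual_edge_def by simp
    next
      case False
      have "A e' 1" "A e' (-1)" unfolding A_def using e'E False by auto
      then have "src e' \<in> T \<longleftrightarrow> tgt e' \<in> T" unfolding T_def
        using reach_fwd reach_bwd by metis
      then show ?thesis using False unfolding g_def dual_edge_def by auto
    qed
  qed
  then show ?thesis unfolding is_coboundary_def by blast
qed

lemma G1:
  assumes G: "graph V E src tgt" and eE: "e \<in> E"
    and P: "\<forall>c. is_01_cycle V E src tgt c \<longrightarrow> pairing E w c \<in> {1, 0, -1}"
    and nb: "\<not> is_coboundary V E src tgt w"
    and co: "cohomologous V E src tgt w (\<lambda>e'. k * dual_edge e e')"
  shows "k \<in> {1, -1}"
proof -
  have fE: "finite E" using G unfolding graph_def by auto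
  obtain g where g: "\<forall>e'\<in>E. w e' - k * dual_edge e e' = g (tgt e') - g (src e')"
    using co unfolding cohomologous_def is_coboundary_def by auto
  have "\<exists>c. is_01_cycle V E src tgt c \<and> c e \<noteq> 0"
  proof (rule ccontr)
    assume "\<not> ?thesis"
    then have "is_coboundary V E src tgt (dual_edge e)" using bridge[OF G eE] by blast
    then obtain h where h: "\<forall>e'\<in>E. dual_edge e e' = h (tgt e') - h (src e')"
      unfolding is_coboundary_def by auto
    have "\<forall>e'\<in>E. w e' = (\<lambda>x. g x + k * h x) (tgt e') - (\<lambda>x. g x + k * h x) (src e')"
      using g h by (auto simp: algebra_simps)
    then have "is_coboundary V E src tgt w" unfolding is_coboundary_def by (intro exI[of _ "\<lambda>x. g x + k * h x"])
    then show False using nb by blast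
  qed
  then obtain c where c: "is_01_cycle V E src tgt c" "c e \<noteq> 0" by auto
  have ce: "c e = 1 \<or> c e = -1" using c eE unfolding is_01_cycle_def by auto
  have peq: "pairing E w c = k * c e"
    using coh_pairing[OF G _ co] c(1) pairing_dual1[OF fE eE] unfolding is_01_cycle_def by simp
  have pm: "pairing E w c \<in> {1, 0, -1}" using P c(1) by blast
  have kc: "k * c e \<in> {1, 0, -1}" using pm unfolding peq .
  have "k \<noteq> 0"
  proof
    assume "k = 0"
    then have "\<forall>e'\<in>E. w e' = g (tgt e') - g (src e')" using g by simp
    then show False using nb unfolding is_coboundary_def by blast
  qed
  then show ?thesis using kc ce by auto
qed


lemma reach_same: "A e' 1 \<Longrightarrow> A e' (-1) \<Longrightarrow>
   (src e' \<in> reach A src tgt u \<longleftrightarrow> tgt e' \<in> reach A src tgt u)"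
  using reach_fwd reach_bwd by metis

lemma cyc_from_reach:
  assumes G: "graph V E src tgt" and eE: "e \<in> E" and nA: "\<And>\<sigma>. \<not> A e \<sigma>"
    and AE: "\<And>e \<sigma>. A e \<sigma> \<Longrightarrow> e \<in> E" and r: "src e \<in> reach A src tgt (tgt e)"
  shows "\<exists>c. is_01_cycle V E src tgt c \<and> c e = 1 \<and> (\<forall>e'. e' \<noteq> e \<longrightarrow> c e' \<noteq> 0 \<longrightarrow> A e' (c e'))"
proof -
  have fE: "finite E" using G unfolding graph_def by auto
  have "\<exists>p. (\<forall>e. e \<notin> E \<longrightarrow> p e = 0) \<and> (\<forall>e. p e \<noteq> 0 \<longrightarrow> (p e = 1 \<or> p e = -1) \<and> A e (p e)) \<and>
     (\<forall>x. bd E src tgt p x = (if x = src e then 1 else 0) - (if x = tgt e then 1 else 0))"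
    by (rule reach_path[where A=A and E=E]) (use fE AE r in auto)
  then obtain p where p1: "\<forall>e. e \<notin> E \<longrightarrow> p e = 0"
    and p2: "\<forall>e. p e \<noteq> 0 \<longrightarrow> (p e = 1 \<or> p e = -1) \<and> A e (p e)"
    and p3: "\<forall>x. bd E src tgt p x = (if x = src e then 1 else 0) - (if x = tgt e then 1 else 0)"
    by blast
  define c where "c = (\<lambda>x. p x + dual_edge e x)"
  have pe: "p e = 0" using p2 nA by blast
  have "is_01_cycle V E src tgt c"
    unfolding is_01_cycle_def is_cycle_bd
  proof (intro conjI ballI allI impI)
    fix e' assume "e' \<notin> E" then show "c e' = 0" using p1 eE unfolding c_def dual_edge_def by auto
  next
    fix v show "bd E src tgt c v = 0" unfolding c_def bd_add bd_dual[OF fE eE] using p3 by auto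
  next
    fix e' assume "e' \<in> E" then show "c e' \<in> {1, 0, -1}"
      using p2 pe unfolding c_def dual_edge_def by (cases "e' = e") auto
  qed
  moreover have "c e = 1" unfolding c_def dual_edge_def using pe by simp
  moreover have "\<forall>e'. e' \<noteq> e \<longrightarrow> c e' \<noteq> 0 \<longrightarrow> A e' (c e')"
    using p2 unfolding c_def dual_edge_def by auto
  ultimately show ?thesis by blast
qed

lemma pairing_add2: "pairing E f (\<lambda>x. a x + b x) = pairing E f a + pairing E f b"
  unfolding pairing_def by (simp add: distrib_left sum.distrib)

lemma pairing_diff2: "pairing E f (\<lambda>x. a x - b x) = pairing E f a - pairing E f b"
  unfolding pairing_def by (simp add: right_diff_distrib sum_subtractf)

lemma pairing_dual_right:
  assumes "finite E" "e0 \<in> E"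
  shows "pairing E f (\<lambda>x. d * dual_edge e0 x) = f e0 * d"
proof -
  have "pairing E f (\<lambda>x. d * dual_edge e0 x) = (\<Sum>e\<in>E. if e = e0 then f e * d else 0)"
    unfolding pairing_def dual_edge_def by (rule sum.cong) auto
  then show ?thesis using assms by simp
qed


lemma lemK2:
  assumes G: "graph V E src tgt" and e0E: "e0 \<in> E" and e1E: "e1 \<in> E" and ne: "e0 \<noteq> e1"
    and P: "\<forall>c. is_01_cycle V E src tgt c \<longrightarrow> pairing E w c \<in> {1, 0, -1}"
    and nb: "\<not> is_coboundary V E src tgt w"
    and wdef: "w = (\<lambda>e. s * dual_edge e1 e + d * dual_edge e0 e)"
    and nC: "\<forall>C. is_01_cycle V E src tgt C \<longrightarrow> C e1 = 0 \<longrightarrow> C e0 = 0"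
  shows "\<exists>f\<in>E. \<exists>\<sigma>\<in>{1, -1::int}. cohomologous V E src tgt w (\<lambda>e'. \<sigma> * dual_edge f e')"
proof -
  define A where "A = (\<lambda>e' (\<sigma>::int). e' \<in> E \<and> e' \<noteq> e0 \<and> e' \<noteq> e1)"
  define T where "T = reach A src tgt (tgt e0)"
  have AE: "\<And>e' \<sigma>. A e' \<sigma> \<Longrightarrow> e' \<in> E" unfolding A_def by auto
  have tT: "tgt e0 \<in> T" unfolding T_def by (rule reach_start)
  have sT: "src e0 \<notin> T"
  proof
    assume "src e0 \<in> T"
    then have r: "src e0 \<in> reach A src tgt (tgt e0)" unfolding T_def .
    have nA: "\<And>\<sigma>. \<not> A e0 \<sigma>" unfolding A_def by simp
    have "\<exists>c. is_01_cycle V E src tgt c \<and> c e0 = 1 \<and> (\<forall>e'. e' \<noteq> e0 \<longrightarrow> c e' \<noteq> 0 \<longrightarrow> A e' (c e'))"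
      by (rule cyc_from_reach[where A=A]) (use G e0E nA AE r in auto)
    then obtain c where c: "is_01_cycle V E src tgt c" "c e0 = 1" "\<forall>e'. e' \<noteq> e0 \<longrightarrow> c e' \<noteq> 0 \<longrightarrow> A e' (c e')"
      by blast
    have "c e1 = 0" using c(3) ne unfolding A_def by auto
    then show False using nC c by auto
  qed
  define g where "g = (\<lambda>x. if x \<in> T then 1 else (0::int))"
  define j where "j = g (tgt e1) - g (src e1)"
  have "\<forall>e'\<in>E. w e' - (s - d * j) * dual_edge e1 e' = (\<lambda>x. d * g x) (tgt e') - (\<lambda>x. d * g x) (src e')"
  proof
    fix e' assume e'E: "e' \<in> E"
    show "w e' - (s - d * j) * dual_edge e1 e' = (\<lambda>x. d * g x) (tgt e') - (\<lambda>x. d * g x) (src e')"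
    proof (cases "e' = e0 \<or> e' = e1")
      case True
      then show ?thesis
      proof
        assume "e' = e0"
        moreover have "g (tgt e0) = 1" "g (src e0) = 0" using tT sT unfolding g_def by auto
        ultimately show ?thesis using ne unfolding wdef dual_edge_def by simp
      next
        assume "e' = e1"
        then show ?thesis using ne unfolding wdef dual_edge_def j_def by (simp add: algebra_simps)
      qed
    next
      case False
      have "A e' 1" "A e' (-1)" unfolding A_def using e'E False by auto
      then have "src e' \<in> T \<longleftrightarrow> tgt e' \<in> T" unfolding T_def by (rule reach_same)
      then have "g (tgt e') = g (src e')" unfolding g_def by simp
      moreover have "w e' = 0" "dual_edge e1 e' = 0" using False unfolding wdef dual_edge_def by auto
      ultimately show ?thesis by (simp add: algebra_simps)
    qed
  qed
  then have co: "cohomologous V E src tgt w (\<lambda>e'. (s - d * j) * dual_edge e1 e')"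
    unfolding cohomologous_def is_coboundary_def by (intro exI[of _ "\<lambda>x. d * g x"]) simp
  have "s - d * j \<in> {1, -1}" by (rule G1[OF G e1E P nb co])
  then show ?thesis using co e1E by blast
qed


lemma lemK1:
  assumes G: "graph V E src tgt" and e0E: "e0 \<in> E" and e1E: "e1 \<in> E" and ne: "e0 \<noteq> e1"
    and sv: "s \<in> {1, -1::int}" and d0: "d \<noteq> 0"
    and P: "\<forall>c. is_01_cycle V E src tgt c \<longrightarrow> pairing E w c \<in> {1, 0, -1}"
    and wdef: "w = (\<lambda>e. s * dual_edge e1 e + d * dual_edge e0 e)"
    and C0: "is_01_cycle V E src tgt C0" "C0 e1 = 0" "C0 e0 \<noteq> 0"
  shows "\<exists>f\<in>E. \<exists>\<sigma>\<in>{1, -1::int}. cohomologous V E src tgt w (\<lambda>e'. \<sigma> * dual_edge f e')"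
proof -
  have fE: "finite E" and fV: "finite V" and endV: "\<forall>e\<in>E. src e \<in> V \<and> tgt e \<in> V"
    using G unfolding graph_def by auto
  have C0e0: "C0 e0 = 1 \<or> C0 e0 = -1" using C0 e0E unfolding is_01_cycle_def by auto
  have "pairing E w C0 = s * C0 e1 + d * C0 e0" unfolding wdef by (rule pairing_dual2[OF fE e0E e1E])
  then have "pairing E w C0 = d * C0 e0" using C0(2) by simp
  moreover have "pairing E w C0 \<in> {1, 0, -1}" using P C0(1) by blast
  ultimately have "d * C0 e0 \<in> {1, 0, -1}" by simp
  then have dv: "d = 1 \<or> d = -1" using C0e0 d0 by auto
  define k where "k = d * C0 e0"
  have kv: "k = 1 \<or> k = -1" unfolding k_def using dv C0e0 by auto
  define C where "C = (\<lambda>x. k * C0 x)"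
  have Ccyc: "is_cycle V E src tgt C" using C0(1)
    unfolding C_def is_01_cycle_def is_cycle_bd bd_mult by simp
  have Cv: "\<forall>x. C x \<in> {1, 0, -1}"
  proof
    fix x show "C x \<in> {1, 0, -1}"
    proof (cases "x \<in> E")
      case True then show ?thesis using C0(1) kv unfolding C_def is_01_cycle_def by auto
    next
      case False then show ?thesis using C0(1) unfolding C_def is_01_cycle_def is_cycle_def by auto
    qed
  qed
  have Ce1: "C e1 = 0" unfolding C_def using C0(2) by simp
  have Ce0: "C e0 = d" unfolding C_def k_def using C0e0 by auto
  define P1 where "P1 = (\<lambda>x. C x - d * dual_edge e0 x)"
  have P1e0: "P1 e0 = 0" unfolding P1_def dual_edge_def using Ce0 by simp
  have P1e1: "P1 e1 = 0" unfolding P1_def dual_edge_def using Ce1 ne by auto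
  have P1v: "\<forall>x. P1 x \<in> {1, 0, -1}"
    using Cv P1e0 unfolding P1_def dual_edge_def by auto
  have P1out: "\<forall>x. x \<notin> E \<longrightarrow> P1 x = 0"
    using Ccyc e0E unfolding P1_def is_cycle_def dual_edge_def by auto
  have P1bd: "\<forall>v\<in>V. bd E src tgt P1 v = - d * ((if tgt e0 = v then 1 else 0) - (if src e0 = v then 1 else 0))"
    using Ccyc unfolding P1_def bd_diff bd_mult bd_dual[OF fE e0E] is_cycle_bd by simp
  define q1 where "q1 = (if s = 1 then tgt e1 else src e1)"
  define p1 where "p1 = (if s = 1 then src e1 else tgt e1)"
  define A where "A = (\<lambda>e' (\<sigma>::int). e' \<in> E \<and> e' \<noteq> e0 \<and> e' \<noteq> e1 \<and> P1 e' \<noteq> \<sigma>)"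
  define T where "T = reach A src tgt q1"
  have AE: "\<And>e' \<sigma>. A e' \<sigma> \<Longrightarrow> e' \<in> E" unfolding A_def by auto
  have qT: "q1 \<in> T" unfolding T_def by (rule reach_start)
  have pT: "p1 \<notin> T"
  proof
    assume "p1 \<in> T"
    then have r: "p1 \<in> reach A src tgt q1" unfolding T_def .
    have "\<exists>p. (\<forall>e. e \<notin> E \<longrightarrow> p e = 0) \<and> (\<forall>e. p e \<noteq> 0 \<longrightarrow> (p e = 1 \<or> p e = -1) \<and> A e (p e)) \<and>
      (\<forall>x. bd E src tgt p x = (if x = p1 then 1 else 0) - (if x = q1 then 1 else 0))"
      by (rule reach_path[where A=A and E=E]) (use fE AE r in auto)
    then obtain P2 where p21: "\<forall>e. e \<notin> E \<longrightarrow> P2 e = 0"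
      and p22: "\<forall>e. P2 e \<noteq> 0 \<longrightarrow> (P2 e = 1 \<or> P2 e = -1) \<and> A e (P2 e)"
      and p23: "\<forall>x. bd E src tgt P2 x = (if x = p1 then 1 else 0) - (if x = q1 then 1 else 0)"
      by blast
    have P2e0: "P2 e0 = 0" and P2e1: "P2 e1 = 0" using p22 unfolding A_def by auto
    define c where "c = (\<lambda>x. P1 x + P2 x + d * dual_edge e0 x + s * dual_edge e1 x)"
    have ce0: "c e0 = d" unfolding c_def using P1e0 P2e0 ne unfolding dual_edge_def by auto
    have ce1: "c e1 = s" unfolding c_def using P1e1 P2e1 ne unfolding dual_edge_def by auto
    have "is_01_cycle V E src tgt c"
      unfolding is_01_cycle_def is_cycle_bd
    proof (intro conjI ballI allI impI)
      fix e' assume "e' \<notin> E" then show "c e' = 0"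
        using P1out p21 e0E e1E unfolding c_def dual_edge_def by auto
    next
      fix v assume vV: "v \<in> V"
      have "bd E src tgt c v = bd E src tgt P1 v + bd E src tgt P2 v + d * bd E src tgt (dual_edge e0) v
          + s * bd E src tgt (dual_edge e1) v"
        unfolding c_def bd_add bd_mult ..
      also have "\<dots> = 0"
      proof -
        have h1: "bd E src tgt P1 v = - d * ((if tgt e0 = v then 1 else 0) - (if src e0 = v then 1 else 0))"
          using P1bd vV by blast
        have h2: "bd E src tgt P2 v = (if v = p1 then 1 else 0) - (if v = q1 then 1 else 0)"
          using p23 by blast
        show ?thesis unfolding h1 h2 bd_dual[OF fE e0E] bd_dual[OF fE e1E]
          using sv unfolding p1_def q1_def by (auto simp: algebra_simps)
      qed
      finally show "bd E src tgt c v = 0" .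
    next
      fix e' assume e'E: "e' \<in> E"
      show "c e' \<in> {1, 0, -1}"
      proof (cases "e' = e0 \<or> e' = e1")
        case True then show ?thesis using ce0 ce1 dv sv by auto
      next
        case False
        then have "c e' = P1 e' + P2 e'" unfolding c_def dual_edge_def by auto
        moreover have "P1 e' \<in> {1, 0, -1}" using P1v by blast
        moreover have "P2 e' = 0 \<or> ((P2 e' = 1 \<or> P2 e' = -1) \<and> P1 e' \<noteq> P2 e')"
          using p22 unfolding A_def by blast
        ultimately show ?thesis by auto
      qed
    qed
    then have "pairing E w c \<in> {1, 0, -1}" using P by blast
    moreover have "pairing E w c = s * c e1 + d * c e0" unfolding wdef by (rule pairing_dual2[OF fE e0E e1E])
    ultimately show False using ce0 ce1 dv sv by auto
  qed
  define g where "g = (\<lambda>x. if x \<in> T then 1 else (0::int))"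
  define \<delta> where "\<delta> = (\<lambda>e. g (tgt e) - g (src e))"
  define X where "X = {e\<in>E. e \<noteq> e0 \<and> e \<noteq> e1 \<and> g (tgt e) \<noteq> g (src e)}"
  have \<delta>e1: "\<delta> e1 = s" using qT pT sv unfolding \<delta>_def g_def q1_def p1_def by auto
  have tau: "\<forall>e\<in>E. \<delta> e * P1 e = (if e \<in> X then -1 else 0)"
  proof
    fix e assume eE: "e \<in> E"
    show "\<delta> e * P1 e = (if e \<in> X then -1 else 0)"
    proof (cases "e = e0 \<or> e = e1")
      case True then show ?thesis using P1e0 P1e1 unfolding X_def by auto
    next
      case False
      show ?thesis
      proof (cases "src e \<in> T \<and> tgt e \<notin> T")
        case True
        then have "\<not> A e 1" using reach_fwd unfolding T_def by metis
        then have "P1 e = 1" using eE False unfolding A_def by auto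
        then show ?thesis using True eE False unfolding \<delta>_def g_def X_def by auto
      next
        case nt: False
        show ?thesis
        proof (cases "tgt e \<in> T \<and> src e \<notin> T")
          case True
          then have "\<not> A e (-1)" using reach_bwd unfolding T_def by metis
          then have "P1 e = -1" using eE False unfolding A_def by auto
          then show ?thesis using True eE False unfolding \<delta>_def g_def X_def by auto
        next
          case False
          then have "g (tgt e) = g (src e)" using nt unfolding g_def by auto
          then show ?thesis unfolding \<delta>_def X_def by auto
        qed
      qed
    qed
  qed
  have fX: "finite X" unfolding X_def using fE by auto
  have "pairing E \<delta> P1 = (\<Sum>e\<in>E. if e \<in> X then -1 else 0)"
    unfolding pairing_def by (rule sum.cong[OF refl]) (use tau in auto)
  also have "\<dots> = - int (card X)"
  proof -
    have "(\<Sum>e\<in>E. if e \<in> X then -1 else 0) = (\<Sum>e\<in>{e\<in>E. e \<in> X}. (-1::int))"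
      using sum.inter_filter[OF fE, of "\<lambda>_. (-1::int)" "\<lambda>e. e \<in> X"] by simp
    also have "{e\<in>E. e \<in> X} = X" unfolding X_def by auto
    finally show ?thesis by simp
  qed
  finally have pc: "pairing E \<delta> P1 = - int (card X)" .
  have "pairing E \<delta> P1 = pairing E \<delta> C - pairing E \<delta> (\<lambda>x. d * dual_edge e0 x)"
    unfolding P1_def by (rule pairing_diff2)
  also have "pairing E \<delta> C = 0" unfolding \<delta>_def by (rule pairing_cob_cycle[OF G Ccyc])
  also have "pairing E \<delta> (\<lambda>x. d * dual_edge e0 x) = \<delta> e0 * d" by (rule pairing_dual_right[OF fE e0E])
  finally have cX: "int (card X) = \<delta> e0 * d" using pc by simp
  have mv: "\<delta> e0 \<in> {1, 0, -1}" unfolding \<delta>_def g_def by auto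
  have wdiff: "\<forall>e'\<in>E. e' \<noteq> e0 \<longrightarrow> e' \<noteq> e1 \<longrightarrow> w e' = 0"
    unfolding wdef dual_edge_def by auto
  have we0: "w e0 = d" and we1: "w e1 = s" unfolding wdef dual_edge_def using ne by auto
  have nX: "\<forall>e'\<in>E. e' \<noteq> e0 \<longrightarrow> e' \<noteq> e1 \<longrightarrow> e' \<notin> X \<longrightarrow> \<delta> e' = 0"
    unfolding X_def \<delta>_def by auto
  have "card X = 0 \<or> card X = 1" using cX mv dv by auto
  then show ?thesis
  proof
    assume "card X = 0"
    then have X0: "X = {}" using fX by simp
    have m0: "\<delta> e0 = 0" using cX dv \<open>card X = 0\<close> by auto
    have "\<forall>e'\<in>E. w e' - d * dual_edge e0 e' = g (tgt e') - g (src e')"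
    proof
      fix e' assume e'E: "e' \<in> E"
      show "w e' - d * dual_edge e0 e' = g (tgt e') - g (src e')"
        using e'E we0 we1 \<delta>e1 m0 ne wdiff nX X0 unfolding \<delta>_def dual_edge_def
        by (cases "e' = e0"; cases "e' = e1") auto
    qed
    then have "cohomologous V E src tgt w (\<lambda>e'. d * dual_edge e0 e')"
      unfolding cohomologous_def is_coboundary_def by (intro exI[of _ g]) simp
    then show ?thesis using e0E dv by blast
  next
    assume "card X = 1"
    then obtain f where Xf: "X = {f}" using card_1_singletonE by blast
    have fX': "f \<in> E" "f \<noteq> e0" "f \<noteq> e1" "g (tgt f) \<noteq> g (src f)" using Xf unfolding X_def by auto
    have m1: "\<delta> e0 = d" using cX dv \<open>card X = 1\<close> by auto
    define \<sigma> where "\<sigma> = - \<delta> f"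
    have \<sigma>v: "\<sigma> \<in> {1, -1}" using fX'(4) unfolding \<sigma>_def \<delta>_def g_def by (auto split: if_splits)
    have "\<forall>e'\<in>E. w e' - \<sigma> * dual_edge f e' = g (tgt e') - g (src e')"
    proof
      fix e' assume e'E: "e' \<in> E"
      show "w e' - \<sigma> * dual_edge f e' = g (tgt e') - g (src e')"
      proof (cases "e' = f")
        case True then show ?thesis using fX' wdiff unfolding \<sigma>_def \<delta>_def dual_edge_def by auto
      next
        case False
        then show ?thesis
          using e'E we0 we1 \<delta>e1 m1 ne wdiff nX Xf fX' unfolding \<delta>_def dual_edge_def
          by (cases "e' = e0"; cases "e' = e1") auto
      qed
    qed
    then have "cohomologous V E src tgt w (\<lambda>e'. \<sigma> * dual_edge f e')"
      unfolding cohomologous_def is_coboundary_def by (intro exI[of _ g]) simp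
    then show ?thesis using fX'(1) \<sigma>v by blast
  qed
qed


lemma coh_trans:
  assumes "cohomologous V E src tgt z w" "cohomologous V E src tgt w u"
  shows "cohomologous V E src tgt z u"
proof -
  obtain g1 where g1: "\<forall>e\<in>E. z e - w e = g1 (tgt e) - g1 (src e)"
    using assms(1) unfolding cohomologous_def is_coboundary_def by auto
  obtain g2 where g2: "\<forall>e\<in>E. w e - u e = g2 (tgt e) - g2 (src e)"
    using assms(2) unfolding cohomologous_def is_coboundary_def by auto
  have "\<forall>e\<in>E. z e - u e = (\<lambda>x. g1 x + g2 x) (tgt e) - (\<lambda>x. g1 x + g2 x) (src e)"
  proof
    fix e assume "e \<in> E"
    then have "z e - w e = g1 (tgt e) - g1 (src e)" "w e - u e = g2 (tgt e) - g2 (src e)"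
      using g1 g2 by auto
    then show "z e - u e = (\<lambda>x. g1 x + g2 x) (tgt e) - (\<lambda>x. g1 x + g2 x) (src e)" by simp
  qed
  then show ?thesis unfolding cohomologous_def is_coboundary_def by (intro exI[of _ "\<lambda>x. g1 x + g2 x"]) simp
qed

lemma sum_sub_zero:
  fixes c :: "'e \<Rightarrow> int"
  assumes "finite E" "F \<subseteq> E" "\<forall>e. e \<notin> F \<longrightarrow> c e = 0"
  shows "(\<Sum>e\<in>{e\<in>E. Q e}. c e) = (\<Sum>e\<in>{e\<in>F. Q e}. c e)"
  by (rule sum.mono_neutral_right) (use assms in auto)

lemma cyc_sub:
  assumes "finite E" "F \<subseteq> E" "is_01_cycle V F src tgt c"
  shows "is_01_cycle V E src tgt c"
proof -
  have z: "\<forall>e. e \<notin> F \<longrightarrow> c e = 0" using assms(3) unfolding is_01_cycle_def is_cycle_def by auto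
  show ?thesis using assms(3) assms(2) z
    unfolding is_01_cycle_def is_cycle_def
    using sum_sub_zero[OF assms(1,2) z, of "\<lambda>e. tgt e = _"] sum_sub_zero[OF assms(1,2) z, of "\<lambda>e. src e = _"]
    by auto
qed

lemma pairing_sub:
  assumes "finite E" "F \<subseteq> E" "\<forall>e. e \<notin> F \<longrightarrow> c e = 0"
  shows "pairing E z c = pairing F z c"
  unfolding pairing_def by (rule sum.mono_neutral_right) (use assms in auto)

lemma main_ind:
  assumes fE: "finite E"
  shows "finite V \<Longrightarrow> (\<forall>e\<in>E. src e \<in> V \<and> tgt e \<in> V) \<Longrightarrow>
    (\<forall>c. is_01_cycle V E src tgt c \<longrightarrow> pairing E z c \<in> {1, 0, -1}) \<Longrightarrow>
    \<not> is_coboundary V E src tgt z \<Longrightarrow>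
    \<exists>e\<in>E. \<exists>s\<in>{1, -1::int}. cohomologous V E src tgt z (\<lambda>e'. s * dual_edge e e')"
  using fE
proof (induction E arbitrary: z rule: finite_induct)
  case empty
  then show ?case unfolding is_coboundary_def by simp
next
  case (insert e0 F)
  let ?E = "insert e0 F"
  have G: "graph V ?E src tgt" using insert unfolding graph_def by auto
  have GF: "graph V F src tgt" using insert unfolding graph_def by auto
  have fE': "finite ?E" using insert by simp
  have e0E: "e0 \<in> ?E" by simp
  have PF: "\<forall>c. is_01_cycle V F src tgt c \<longrightarrow> pairing F z c \<in> {1, 0, -1}"
  proof (intro allI impI)
    fix c assume c: "is_01_cycle V F src tgt c"
    have "is_01_cycle V ?E src tgt c" by (rule cyc_sub[OF fE' _ c]) auto
    then have "pairing ?E z c \<in> {1, 0, -1}" using insert.prems by blast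
    moreover have "pairing ?E z c = pairing F z c"
      by (rule pairing_sub[OF fE']) (use c in \<open>auto simp: is_01_cycle_def is_cycle_def\<close>)
    ultimately show "pairing F z c \<in> {1, 0, -1}" by simp
  qed
  show ?case
  proof (cases "is_coboundary V F src tgt z")
    case True
    then obtain g where g: "\<forall>e\<in>F. z e = g (tgt e) - g (src e)" unfolding is_coboundary_def by auto
    define d where "d = z e0 - (g (tgt e0) - g (src e0))"
    have "\<forall>e\<in>?E. z e - d * dual_edge e0 e = g (tgt e) - g (src e)"
      using g insert.hyps(2) unfolding d_def dual_edge_def by auto
    then have co: "cohomologous V ?E src tgt z (\<lambda>e. d * dual_edge e0 e)"
      unfolding cohomologous_def is_coboundary_def by (intro exI[of _ g]) simp
    have "d \<in> {1, -1}" by (rule G1[OF G e0E _ _ co]) (use insert.prems in auto)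
    then show ?thesis using co by blast
  next
    case False
    then obtain e1 s where e1F: "e1 \<in> F" and sv: "s \<in> {1, -1::int}"
      and co1: "cohomologous V F src tgt z (\<lambda>e'. s * dual_edge e1 e')"
      using insert.IH[OF insert.prems(1) _ PF] insert.prems(2) by blast
    obtain g where g: "\<forall>e\<in>F. z e - s * dual_edge e1 e = g (tgt e) - g (src e)"
      using co1 unfolding cohomologous_def is_coboundary_def by auto
    have ne: "e0 \<noteq> e1" using e1F insert.hyps(2) by auto
    define d where "d = z e0 - (g (tgt e0) - g (src e0))"
    define w where "w = (\<lambda>e. s * dual_edge e1 e + d * dual_edge e0 e)"
    have "\<forall>e\<in>?E. z e - w e = g (tgt e) - g (src e)"
      using g insert.hyps(2) ne unfolding d_def w_def dual_edge_def by auto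
    then have cozw: "cohomologous V ?E src tgt z w"
      unfolding cohomologous_def is_coboundary_def by (intro exI[of _ g]) simp
    have e1E: "e1 \<in> ?E" using e1F by simp
    show ?thesis
    proof (cases "d = 0")
      case True
      then have "w = (\<lambda>e'. s * dual_edge e1 e')" unfolding w_def by simp
      then show ?thesis using cozw e1E sv by auto
    next
      case d0: False
      have Pw: "\<forall>c. is_01_cycle V ?E src tgt c \<longrightarrow> pairing ?E w c \<in> {1, 0, -1}"
      proof (intro allI impI)
        fix c assume c: "is_01_cycle V ?E src tgt c"
        then have "pairing ?E z c = pairing ?E w c"
          using coh_pairing[OF G _ cozw] unfolding is_01_cycle_def by blast
        then show "pairing ?E w c \<in> {1, 0, -1}" using insert.prems(3) c by metis
      qed
      have nbw: "\<not> is_coboundary V ?E src tgt w"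
      proof
        assume "is_coboundary V ?E src tgt w"
        then have "cohomologous V ?E src tgt w (\<lambda>_. 0)" unfolding cohomologous_def by simp
        then have "cohomologous V ?E src tgt z (\<lambda>_. 0)" by (rule coh_trans[OF cozw])
        then show False using insert.prems(4) unfolding cohomologous_def by simp
      qed
      have "\<exists>f\<in>?E. \<exists>\<sigma>\<in>{1, -1::int}. cohomologous V ?E src tgt w (\<lambda>e'. \<sigma> * dual_edge f e')"
      proof (cases "\<exists>C0. is_01_cycle V ?E src tgt C0 \<and> C0 e1 = 0 \<and> C0 e0 \<noteq> 0")
        case True
        then obtain C0 where "is_01_cycle V ?E src tgt C0" "C0 e1 = 0" "C0 e0 \<noteq> 0" by blast
        then show ?thesis using lemK1[OF G e0E e1E ne sv d0 Pw w_def] by blast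
      next
        case False
        then show ?thesis using lemK2[OF G e0E e1E ne Pw nbw w_def] by blast
      qed
      then show ?thesis using coh_trans[OF cozw] by blast
    qed
  qed
qed

theorem lemma5p3:
  fixes V :: "'v set" and E :: "'e set" and src tgt :: "'e \<Rightarrow> 'v" and z :: "'e \<Rightarrow> int"
  assumes "graph V E src tgt"
    and "\<not> is_coboundary V E src tgt z"
  shows "(\<exists>e\<in>E. \<exists>s\<in>{1, -1::int}. cohomologous V E src tgt z (\<lambda>e'. s * dual_edge e e'))
     \<longleftrightarrow> (\<forall>c. is_01_cycle V E src tgt c \<longrightarrow> pairing E z c \<in> {1, 0, -1})"
proof
  assume "\<exists>e\<in>E. \<exists>s\<in>{1, -1::int}. cohomologous V E src tgt z (\<lambda>e'. s * dual_edge e e')"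
  then obtain e s where eE: "e \<in> E" and sv: "s \<in> {1, -1::int}"
    and co: "cohomologous V E src tgt z (\<lambda>e'. s * dual_edge e e')" by blast
  have fE: "finite E" using assms(1) unfolding graph_def by auto
  show "\<forall>c. is_01_cycle V E src tgt c \<longrightarrow> pairing E z c \<in> {1, 0, -1}"
  proof (intro allI impI)
    fix c assume c: "is_01_cycle V E src tgt c"
    have "pairing E z c = s * c e"
      using coh_pairing[OF assms(1) _ co] c pairing_dual1[OF fE eE] unfolding is_01_cycle_def by simp
    moreover have "c e \<in> {1, 0, -1}" using c eE unfolding is_01_cycle_def by blast
    ultimately show "pairing E z c \<in> {1, 0, -1}" using sv by auto
  qed
next
  assume "\<forall>c. is_01_cycle V E src tgt c \<longrightarrow> pairing E z c \<in> {1, 0, -1}"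
  then show "\<exists>e\<in>E. \<exists>s\<in>{1, -1::int}. cohomologous V E src tgt z (\<lambda>e'. s * dual_edge e e')"
    using main_ind[of E V src tgt z] assms unfolding graph_def by blast
qed

end
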